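(* Let $F\colon[a,b]\to\mathbb{R}$ and $f\colon[a,b]\to\mathbb{R}$ be such that $LD_1F(x)=f(x)$ for all $x\in[a,b]$. If $f$ is Laplace integrable on $[a,b]$, then $\int_a^xf=F(x)-F(a)$ for all $x\in[a,b]$.
   Context: Laplace derivative: for $F$ Perron integrable near $x$, $LD_1F(x)$ is the common value, when both exist and are equal, of $\lim_{s\to\infty}s^2\int_0^\delta e^{-st}[F(x+t)-F(x)]dt$ and $\lim_{s\to\infty}(-s^2)\int_0^\delta e^{-st}[F(x-t)-F(x)]dt$ for some $\delta>0$ (one-sided at endpoints). Lower/upper derivates $\underline{LD}_1,\overline{LD}_1$ use $\liminf$/$\limsup$, minimum/maximum over the two sides. Laplace integral: a major function of $f$ is a continuous $U$ on $[a,b]$ with $\underline{LD}_1U\geqslant f$ and $\underline{LD}_1U>-\infty$ everywhere; a minor function is a continuous $V$ with $\overline{LD}_1V\leqslant f$ and $\overline{LD}_1V<\infty$ everywhere; $f$ is Laplace integrable if $\sup_V(V(b)-V(a))=\inf_U(U(b)-U(a))$ is finite, the value being $\int_a^bf$. *)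

theory Defs
  imports "HOL-Analysis.Analysis"
begin

text \<open>Perron integrals are rendered by the (equivalent) Henstock--Kurzweil integral
  of HOL-Analysis.  The right / left Laplace expressions with parameter s:\<close>

definition lap_R :: "(real \<Rightarrow> real) \<Rightarrow> real \<Rightarrow> real \<Rightarrow> real \<Rightarrow> real" where
  "lap_R F x \<delta> s = s\<^sup>2 * integral {0..\<delta>} (\<lambda>t. exp (- s * t) * (F (x + t) - F x))"

definition lap_L :: "(real \<Rightarrow> real) \<Rightarrow> real \<Rightarrow> real \<Rightarrow> real \<Rightarrow> real" where
  "lap_L F x \<delta> s = - (s\<^sup>2) * integral {0..\<delta>} (\<lambda>t. exp (- s * t) * (F (x - t) - F x))"

definition lap_adm :: "real \<Rightarrow> real \<Rightarrow> (real \<Rightarrow> real) \<Rightarrow> real \<Rightarrow> real \<Rightarrow> bool" where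
  "lap_adm a b F x \<delta> \<longleftrightarrow> \<delta> > 0
     \<and> (x < b \<longrightarrow> x + \<delta> \<le> b \<and> F integrable_on {x..x + \<delta>})
     \<and> (a < x \<longrightarrow> a \<le> x - \<delta> \<and> F integrable_on {x - \<delta>..x})"

definition has_LD1 :: "real \<Rightarrow> real \<Rightarrow> (real \<Rightarrow> real) \<Rightarrow> real \<Rightarrow> real \<Rightarrow> bool" where
  "has_LD1 a b F x D \<longleftrightarrow> (\<exists>\<delta>. lap_adm a b F x \<delta>
     \<and> (x < b \<longrightarrow> (lap_R F x \<delta> \<longlongrightarrow> D) at_top)
     \<and> (a < x \<longrightarrow> (lap_L F x \<delta> \<longlongrightarrow> D) at_top))"

text \<open>Lower / upper Laplace derivates (extended-real valued): minimum / maximum over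
  the available sides of liminf / limsup as s \<rightarrow> \<infinity>.\<close>

definition lower_LD1 :: "real \<Rightarrow> real \<Rightarrow> (real \<Rightarrow> real) \<Rightarrow> real \<Rightarrow> real \<Rightarrow> ereal" where
  "lower_LD1 a b F x \<delta> = Inf ({Liminf at_top (\<lambda>s. ereal (lap_R F x \<delta> s)) | _::unit. x < b}
                           \<union> {Liminf at_top (\<lambda>s. ereal (lap_L F x \<delta> s)) | _::unit. a < x})"

definition upper_LD1 :: "real \<Rightarrow> real \<Rightarrow> (real \<Rightarrow> real) \<Rightarrow> real \<Rightarrow> real \<Rightarrow> ereal" where
  "upper_LD1 a b F x \<delta> = Sup ({Limsup at_top (\<lambda>s. ereal (lap_R F x \<delta> s)) | _::unit. x < b}
                           \<union> {Limsup at_top (\<lambda>s. ereal (lap_L F x \<delta> s)) | _::unit. a < x})"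

definition lap_major :: "real \<Rightarrow> real \<Rightarrow> (real \<Rightarrow> real) \<Rightarrow> (real \<Rightarrow> real) \<Rightarrow> bool" where
  "lap_major a b f U \<longleftrightarrow> continuous_on {a..b} U \<and>
     (\<forall>x\<in>{a..b}. \<exists>\<delta>. lap_adm a b U x \<delta>
        \<and> lower_LD1 a b U x \<delta> \<ge> ereal (f x) \<and> lower_LD1 a b U x \<delta> > - \<infinity>)"

definition lap_minor :: "real \<Rightarrow> real \<Rightarrow> (real \<Rightarrow> real) \<Rightarrow> (real \<Rightarrow> real) \<Rightarrow> bool" where
  "lap_minor a b f V \<longleftrightarrow> continuous_on {a..b} V \<and>
     (\<forall>x\<in>{a..b}. \<exists>\<delta>. lap_adm a b V x \<delta>
        \<and> upper_LD1 a b V x \<delta> \<le> ereal (f x) \<and> upper_LD1 a b V x \<delta> < \<infinity>)"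

definition lap_integrable :: "real \<Rightarrow> real \<Rightarrow> (real \<Rightarrow> real) \<Rightarrow> bool" where
  "lap_integrable a b f \<longleftrightarrow>
     (let Mj = {U b - U a | U. lap_major a b f U}; Mn = {V b - V a | V. lap_minor a b f V} in
      Sup (ereal ` Mn) = Inf (ereal ` Mj) \<and> \<bar>Inf (ereal ` Mj)\<bar> \<noteq> \<infinity>)"

definition lap_integral :: "real \<Rightarrow> real \<Rightarrow> (real \<Rightarrow> real) \<Rightarrow> real" where
  "lap_integral a b f = real_of_ereal (Inf (ereal ` {U b - U a | U. lap_major a b f U}))"

end

theory Submission
  imports Defs "HOL-Real_Asymp.Real_Asymp"
begin


lemma shift_int:
  fixes G :: "real \<Rightarrow> real"
  assumes "G integrable_on {y..y+d}"
  shows "(\<lambda>t. G (y+t)) integrable_on {0..d}"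
    and "integral {0..d} (\<lambda>t. G (y+t)) = integral {y..y+d} G"
proof -
  have "(G has_integral integral {y..y+d} G) {y..y+d}" using assms by auto
  from has_integral_shift_real_ivl[OF this, of y]
  have "((\<lambda>t. G (y+t)) has_integral integral {y..y+d} G) {0..d}"
    by (simp add: add.commute)
  then show "(\<lambda>t. G (y+t)) integrable_on {0..d}" "integral {0..d} (\<lambda>t. G (y+t)) = integral {y..y+d} G"
    by (auto simp: integral_unique)
qed

lemma refl_int:
  fixes G :: "real \<Rightarrow> real"
  assumes "G integrable_on {y-d..y}"
  shows "(\<lambda>t. G (y-t)) integrable_on {0..d}"
    and "integral {0..d} (\<lambda>t. G (y-t)) = integral {y-d..y} G"
proof -
  have "(G has_integral integral {y-d..y} G) {y-d..y}" using assms by auto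
  from has_integral_shift_real_ivl[OF this, of y]
  have "((\<lambda>t. G (t+y)) has_integral integral {y-d..y} G) {(-d)..0}"
    by simp
  then have "((\<lambda>t. G (-t+y)) has_integral integral {y-d..y} G) {-0..-(-d)}"
    using has_integral_reflect_real[of "\<lambda>t. G (t+y)"] by blast
  then have "((\<lambda>t. G (y-t)) has_integral integral {y-d..y} G) {0..d}"
    by simp
  then show "(\<lambda>t. G (y-t)) integrable_on {0..d}" "integral {0..d} (\<lambda>t. G (y-t)) = integral {y-d..y} G"
    by (auto simp: integral_unique)
qed

lemma cmp_lemma:
  fixes K w :: "real \<Rightarrow> real"
  assumes K: "K integrable_on {0..\<tau>}" and "0 \<le> \<tau>"
    and E: "\<And>t. 0 \<le> t \<Longrightarrow> t \<le> \<tau> \<Longrightarrow> integral {0..t} K \<le> 0"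
    and w: "\<And>x y. 0 \<le> x \<Longrightarrow> x \<le> y \<Longrightarrow> y \<le> \<tau> \<Longrightarrow> w y \<le> w x"
    and w0: "0 \<le> w \<tau>"
  shows "(\<lambda>t. w t * K t) integrable_on {0..\<tau>}" "integral {0..\<tau>} (\<lambda>t. w t * K t) \<le> 0"
proof -
  obtain c where c: "c \<in> {0..\<tau>}"
    and hi: "((\<lambda>x. (- w x) * K x) has_integral ((- w 0) * integral {0..c} K + (- w \<tau>) * integral {c..\<tau>} K)) {0..\<tau>}"
    using second_mean_value_theorem_full[OF K \<open>0 \<le> \<tau>\<close>, where g="\<lambda>x. - w x"] w by auto
  have comb: "integral {c..\<tau>} K = integral {0..\<tau>} K - integral {0..c} K"
    using Henstock_Kurzweil_Integration.integral_combine[where a=0 and c=c and b=\<tau> and f=K] c K by auto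
  from has_integral_neg[OF hi]
  have hi2: "((\<lambda>x. w x * K x) has_integral (w 0 - w \<tau>) * integral {0..c} K + w \<tau> * integral {0..\<tau>} K) {0..\<tau>}"
    by (simp add: comb algebra_simps)
  then show "(\<lambda>t. w t * K t) integrable_on {0..\<tau>}" by auto
  have "w \<tau> \<le> w 0" using w[of 0 \<tau>] \<open>0 \<le> \<tau>\<close> by auto
  moreover have "integral {0..c} K \<le> 0" "integral {0..\<tau>} K \<le> 0" using E c \<open>0 \<le> \<tau>\<close> by auto
  ultimately have "(w 0 - w \<tau>) * integral {0..c} K + w \<tau> * integral {0..\<tau>} K \<le> 0"
    using w0 by (simp add: add_nonpos_nonpos mult_nonneg_nonpos)
  then show "integral {0..\<tau>} (\<lambda>t. w t * K t) \<le> 0" using hi2 integral_unique by metis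
qed

lemma exp_weight_integrable:
  fixes h :: "real \<Rightarrow> real"
  assumes "h integrable_on {u..v}" "u \<le> v" "0 \<le> s"
  shows "(\<lambda>t. exp (- s * t) * h t) integrable_on {u..v}"
proof -
  obtain c where "((\<lambda>x. (- exp (- s * x)) * h x) has_integral ((- exp (- s * u)) * integral {u..c} h + (- exp (- s * v)) * integral {c..v} h)) {u..v}"
    using second_mean_value_theorem_full[OF assms(1,2), where g="\<lambda>x. - exp (- s * x)"] assms(3)
    by (auto simp: mult_left_mono)
  from has_integral_neg[OF this] show ?thesis by auto
qed

lemma exp_int:
  fixes s d A e :: real
  assumes "0 < s" "0 \<le> d"
  shows "((\<lambda>u. exp (- s * u) * (A - e * u)) has_integral
     (A/s - e/s\<^sup>2 - A*exp(-s*d)/s + e*exp(-s*d)*(1+s*d)/s\<^sup>2)) {0..d}"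
proof -
  define P where "P u = - A * exp (- s * u) / s + e * exp (- s * u) * (1 + s*u) / s\<^sup>2" for u
  have "((\<lambda>u. exp (- s * u) * (A - e * u)) has_integral (P d - P 0)) {0..d}"
  proof (rule fundamental_theorem_of_calculus[OF assms(2)])
    fix x assume "x \<in> {0..d}"
    have "(P has_real_derivative exp (- s * x) * (A - e * x)) (at x)"
      unfolding P_def
      by (rule derivative_eq_intros refl | use assms in \<open>simp add: field_simps power2_eq_square\<close>)+
    then show "(P has_vector_derivative exp (- s * x) * (A - e * x)) (at x within {0..d})"
      by (simp add: has_real_derivative_iff_has_vector_derivative has_vector_derivative_at_within)
  qed
  then show ?thesis using assms by (simp add: P_def field_simps power2_eq_square)
qed

lemma poly_int:
  fixes d A e :: real
  assumes "0 \<le> d"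
  shows "((\<lambda>u. A - e * u) has_integral (A*d - e*d\<^sup>2/2)) {0..d}"
proof -
  define P where "P u = A*u - e*u\<^sup>2/2" for u
  have "((\<lambda>u. A - e * u) has_integral (P d - P 0)) {0..d}"
  proof (rule fundamental_theorem_of_calculus[OF assms])
    fix x assume "x \<in> {0..d}"
    have "(P has_real_derivative A - e * x) (at x)"
      unfolding P_def
      by (rule derivative_eq_intros refl | simp add: field_simps power2_eq_square)+
    then show "(P has_vector_derivative A - e * x) (at x within {0..d})"
      by (simp add: has_real_derivative_iff_has_vector_derivative has_vector_derivative_at_within)
  qed
  then show ?thesis by (simp add: P_def)
qed

lemma shrink_gen:
  fixes h :: "real \<Rightarrow> real"
  assumes h: "h integrable_on {0..d}" and "0 < \<tau>" "\<tau> \<le> d"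
  shows "((\<lambda>s. s\<^sup>2 * integral {0..d} (\<lambda>t. exp (- s * t) * h t)
              - s\<^sup>2 * integral {0..\<tau>} (\<lambda>t. exp (- s * t) * h t)) \<longlongrightarrow> 0) at_top"
proof -
  have h2: "h integrable_on {\<tau>..d}" using integrable_subinterval_real[OF h, of \<tau> d] assms by auto
  have "bounded {integral (cbox c e) h |c e. cbox c e \<subseteq> cbox \<tau> d}"
    using bounded_integrals_over_subintervals[of h \<tau> d] h2 by auto
  then obtain B where B: "\<And>z. z \<in> {integral (cbox c e) h |c e. cbox c e \<subseteq> cbox \<tau> d} \<Longrightarrow> norm z \<le> B"
    by (auto simp: bounded_iff)
  have Bb: "\<bar>integral {u..v} h\<bar> \<le> B" if "\<tau> \<le> u" "u \<le> v" "v \<le> d" for u v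
    using B[of "integral {u..v} h"] that by fastforce
  have ev: "eventually (\<lambda>s. norm (s\<^sup>2 * integral {0..d} (\<lambda>t. exp (- s * t) * h t)
              - s\<^sup>2 * integral {0..\<tau>} (\<lambda>t. exp (- s * t) * h t)) \<le> s\<^sup>2 * exp (- s * \<tau>) * (2 * B)) at_top"
    using eventually_ge_at_top[of 0]
  proof eventually_elim
    case (elim s)
    have i: "(\<lambda>t. exp (- s * t) * h t) integrable_on {0..d}"
      using exp_weight_integrable[OF h _ elim] assms by auto
    have comb: "integral {0..d} (\<lambda>t. exp (- s * t) * h t) - integral {0..\<tau>} (\<lambda>t. exp (- s * t) * h t)
        = integral {\<tau>..d} (\<lambda>t. exp (- s * t) * h t)"
      using Henstock_Kurzweil_Integration.integral_combine[where a=0 and c=\<tau> and b=d, OF _ _ i] assms by auto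
    obtain c where c: "c \<in> {\<tau>..d}"
      and hi: "((\<lambda>x. (- exp (- s * x)) * h x) has_integral ((- exp (- s * \<tau>)) * integral {\<tau>..c} h + (- exp (- s * d)) * integral {c..d} h)) {\<tau>..d}"
      using second_mean_value_theorem_full[OF h2 \<open>\<tau> \<le> d\<close>, where g="\<lambda>x. - exp (- s * x)"] elim
      by (auto simp: mult_left_mono)
    have "integral {\<tau>..d} (\<lambda>t. exp (- s * t) * h t) = exp (- s * \<tau>) * integral {\<tau>..c} h + exp (- s * d) * integral {c..d} h"
      using integral_unique[OF has_integral_neg[OF hi]] by simp
    moreover have "\<bar>exp (- s * \<tau>) * integral {\<tau>..c} h\<bar> \<le> exp (- s * \<tau>) * B"
      using Bb[of \<tau> c] c by (simp add: abs_mult mult_left_mono)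
    moreover have "\<bar>exp (- s * d) * integral {c..d} h\<bar> \<le> exp (- s * \<tau>) * B"
    proof -
      have "exp (- s * d) \<le> exp (- s * \<tau>)" using elim assms by (simp add: mult_left_mono)
      moreover have "\<bar>integral {c..d} h\<bar> \<le> B" using Bb[of c d] c by auto
      ultimately show ?thesis by (simp add: abs_mult mult_mono)
    qed
    ultimately have "\<bar>integral {\<tau>..d} (\<lambda>t. exp (- s * t) * h t)\<bar> \<le> exp (- s * \<tau>) * (2*B)"
      by linarith
    then have "\<bar>s\<^sup>2 * integral {\<tau>..d} (\<lambda>t. exp (- s * t) * h t)\<bar> \<le> s\<^sup>2 * (exp (- s * \<tau>) * (2*B))"
      by (simp add: abs_mult mult_left_mono)
    then show ?case using comb by (simp add: right_diff_distrib[symmetric] mult.assoc)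
  qed
  have "((\<lambda>s. s\<^sup>2 * exp (- s * \<tau>)) \<longlongrightarrow> 0) at_top" using \<open>0 < \<tau>\<close> by real_asymp
  then have "((\<lambda>s. s\<^sup>2 * exp (- s * \<tau>) * (2 * B)) \<longlongrightarrow> 0) at_top"
    using tendsto_mult_left_zero by blast
  from Lim_null_comparison[OF ev this] show ?thesis .
qed

lemma shrink_R:
  fixes G :: "real \<Rightarrow> real"
  assumes "G integrable_on {y..y+d}" "0 < \<tau>" "\<tau> \<le> d"
  shows "((\<lambda>s. lap_R G y d s - lap_R G y \<tau> s) \<longlongrightarrow> 0) at_top"
proof -
  have "(\<lambda>t. G (y+t) - G y) integrable_on {0..d}"
    using shift_int(1)[OF assms(1)] by (intro integrable_diff) auto
  from shrink_gen[OF this assms(2,3)] show ?thesis by (simp add: lap_R_def)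
qed

lemma shrink_L:
  fixes G :: "real \<Rightarrow> real"
  assumes "G integrable_on {y-d..y}" "0 < \<tau>" "\<tau> \<le> d"
  shows "((\<lambda>s. lap_L G y d s - lap_L G y \<tau> s) \<longlongrightarrow> 0) at_top"
proof -
  have "(\<lambda>t. G (y-t) - G y) integrable_on {0..d}"
    using refl_int(1)[OF assms(1)] by (intro integrable_diff) auto
  from tendsto_minus[OF shrink_gen[OF this assms(2,3)]] show ?thesis by (simp add: lap_L_def)
qed



lemma MT:
  fixes G :: "real \<Rightarrow> real"
  assumes pq: "p < q" and GI: "G integrable_on {p..q}"
    and R: "\<And>y. p \<le> y \<Longrightarrow> y < q \<Longrightarrow> \<exists>d>0. y + d \<le> q \<and> (\<forall>\<eta>>0. eventually (\<lambda>s. lap_R G y d s > -\<eta>) at_top)"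
    and L: "\<And>y. p < y \<Longrightarrow> y \<le> q \<Longrightarrow> \<exists>d>0. p \<le> y - d \<and> (\<forall>\<eta>>0. eventually (\<lambda>s. lap_L G y d s > -\<eta>) at_top)"
  shows "G p \<le> G q"
proof (rule ccontr)
  assume neg: "\<not> G p \<le> G q"
  define \<epsilon> where "\<epsilon> = (G p - G q)/(q-p)"
  have epos: "\<epsilon> > 0" using neg pq by (simp add: \<epsilon>_def)
  define k where "k = G p + \<epsilon>*p"
  have e0: "\<epsilon>*(q-p) = G p - G q" using pq by (simp add: \<epsilon>_def)
  have kq: "k - \<epsilon>*q = G q" unfolding k_def using e0 by (simp add: right_diff_distrib)
  define \<Phi> where "\<Phi> y = integral {p..y} G" for y
  define \<Psi> where "\<Psi> y = \<Phi> y - k*y + \<epsilon>*y\<^sup>2/2" for y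
  have "continuous_on {p..q} \<Phi>" unfolding \<Phi>_def by (rule indefinite_integral_continuous_1[OF GI])
  then have "continuous_on {p..q} \<Psi>" unfolding \<Psi>_def by (intro continuous_intros) auto
  then obtain x0 where x0: "x0 \<in> {p..q}" and mx: "\<And>y. y \<in> {p..q} \<Longrightarrow> \<Psi> y \<le> \<Psi> x0"
    using continuous_attains_sup[of "{p..q}" \<Psi>] pq by auto
  define k' where "k' = k - \<epsilon>*x0"
  have lim: "((\<lambda>s. exp (- s * d) * (1 + s * d)) \<longlongrightarrow> 0) at_top" if "d > 0" for d :: real
    using that by real_asymp
  have evh: "eventually (\<lambda>s. exp (- s * d) * (1 + s * d) < 1/2) at_top" if "d > 0" for d :: real
    using order_tendstoD(2)[OF lim[OF that], of "1/2"] by simp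
  have Phi_comb: "\<Phi> v = \<Phi> u + integral {u..v} G" if "p \<le> u" "u \<le> v" "v \<le> q" for u v
  proof -
    have "G integrable_on {p..v}" using integrable_subinterval_real[OF GI, of p v] that by auto
    then show ?thesis unfolding \<Phi>_def
      using Henstock_Kurzweil_Integration.integral_combine[where a=p and c=u and b=v and f=G] that by auto
  qed
  have A: "G x0 < k'" if xq: "x0 < q"
  proof (rule ccontr)
    assume "\<not> G x0 < k'"
    then have Ale: "k' - G x0 \<le> 0" by simp
    obtain d where d: "d > 0" "x0 + d \<le> q" and ev: "\<forall>\<eta>>0. eventually (\<lambda>s. lap_R G x0 d s > -\<eta>) at_top"
      using R[of x0] x0 xq by auto
    define g where "g t = G (x0 + t)" for t
    define K where "K t = g t - (k' - \<epsilon> * t)" for t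
    have Gsub: "G integrable_on {x0..x0+t}" if "0 \<le> t" "t \<le> d" for t
      using integrable_subinterval_real[OF GI, of x0 "x0+t"] that x0 d by auto
    have gi: "g integrable_on {0..t}" "integral {0..t} g = integral {x0..x0+t} G" if "0 \<le> t" "t \<le> d" for t
      using shift_int[OF Gsub[OF that]] unfolding g_def by auto
    have Ki: "K integrable_on {0..t}" if "0 \<le> t" "t \<le> d" for t
    proof -
      have "(\<lambda>u. k' - \<epsilon>*u) integrable_on {0..t}" using poly_int[of t k' \<epsilon>] that by (auto intro: has_integral_integrable)
      then show ?thesis unfolding K_def by (rule integrable_diff[OF gi(1)[OF that]])
    qed
    have KE: "integral {0..t} K \<le> 0" if "0 \<le> t" "t \<le> d" for t
    proof -
      have "\<Psi> (x0 + t) \<le> \<Psi> x0" using mx[of "x0+t"] x0 d that by auto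
      moreover have "\<Phi> (x0 + t) = \<Phi> x0 + integral {x0..x0+t} G" using Phi_comb[of x0 "x0+t"] x0 d that by auto
      moreover have "\<epsilon>*(x0+t)\<^sup>2/2 = \<epsilon>*x0\<^sup>2/2 + \<epsilon>*x0*t + \<epsilon>*t\<^sup>2/2" "k*(x0+t) = k*x0 + k*t"
          "(k - \<epsilon>*x0)*t = k*t - \<epsilon>*x0*t"
        by (simp_all add: power2_eq_square algebra_simps)
      ultimately have "integral {x0..x0+t} G \<le> k'*t - \<epsilon>*t\<^sup>2/2"
        unfolding \<Psi>_def k'_def by linarith
      moreover have "integral {0..t} K = integral {0..t} g - (k'*t - \<epsilon>*t\<^sup>2/2)"
        unfolding K_def using gi(1)[OF that] poly_int[of t k' \<epsilon>] that
        by (subst integral_diff) (auto simp: integral_unique)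
      ultimately show ?thesis using gi(2)[OF that] by simp
    qed
    have evb: "eventually (\<lambda>s. lap_R G x0 d s \<le> - \<epsilon> * (1 - exp (- s * d) * (1 + s * d))) at_top"
      using eventually_gt_at_top[of 0]
    proof eventually_elim
      case (elim s)
      have c1: "(\<lambda>t. exp (- s * t) * K t) integrable_on {0..d}"
           "integral {0..d} (\<lambda>t. exp (- s * t) * K t) \<le> 0"
        using cmp_lemma[OF Ki[of d] _ KE, of "\<lambda>t. exp (- s * t)"] d elim by (auto simp: mult_left_mono)
      have "((\<lambda>t. exp (- s * t) * (G (x0 + t) - G x0)) has_integral
          integral {0..d} (\<lambda>t. exp (- s * t) * K t) + ((k' - G x0)/s - \<epsilon>/s\<^sup>2 - (k' - G x0)*exp(-s*d)/s + \<epsilon>*exp(-s*d)*(1+s*d)/s\<^sup>2)) {0..d}"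
      proof (rule has_integral_eq[OF _ has_integral_add[OF integrable_integral[OF c1(1)] exp_int[OF elim, of d "k' - G x0" \<epsilon>]]])
        show "exp (- s * t) * K t + exp (- s * t) * (k' - G x0 - \<epsilon> * t) = exp (- s * t) * (G (x0 + t) - G x0)" for t
          by (simp add: K_def g_def algebra_simps)
      qed (use d in auto)
      then have "lap_R G x0 d s = s\<^sup>2 * integral {0..d} (\<lambda>t. exp (- s * t) * K t)
          + (((k' - G x0) * s) * (1 - exp (- s * d)) - \<epsilon> * (1 - exp (- s * d) * (1 + s * d)))"
        unfolding lap_R_def using elim by (simp add: integral_unique field_simps power2_eq_square)
      moreover have "s\<^sup>2 * integral {0..d} (\<lambda>t. exp (- s * t) * K t) \<le> 0"
        using c1(2) by (simp add: mult_nonneg_nonpos)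
      moreover have "((k' - G x0) * s) * (1 - exp (- s * d)) \<le> 0"
        using Ale elim d by (intro mult_nonpos_nonneg) auto
      ultimately show ?case by linarith
    qed
    obtain N where N: "\<forall>s\<ge>N. lap_R G x0 d s \<le> - \<epsilon> * (1 - exp (- s * d) * (1 + s * d)) \<and>
        exp (- s * d) * (1 + s * d) < 1/2 \<and> -(\<epsilon>/2) < lap_R G x0 d s"
      using eventually_conj[OF evb eventually_conj[OF evh[OF d(1)] ev[rule_format, OF half_gt_zero[OF epos]]]]
      unfolding eventually_at_top_linorder by blast
    then have h: "lap_R G x0 d N \<le> - \<epsilon> * (1 - exp (- N * d) * (1 + N * d))"
        "exp (- N * d) * (1 + N * d) < 1/2" "-(\<epsilon>/2) < lap_R G x0 d N" by auto
    have "\<epsilon>*(1/2) < \<epsilon>*(1 - exp (- N * d) * (1 + N * d))"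
      using h(2) epos by (intro mult_strict_left_mono) auto
    then show False using h(1,3) by linarith
  qed
  have B: "k' < G x0" if px: "p < x0"
  proof (rule ccontr)
    assume "\<not> k' < G x0"
    then have Age: "k' - G x0 \<ge> 0" by simp
    obtain d where d: "d > 0" "p \<le> x0 - d" and ev: "\<forall>\<eta>>0. eventually (\<lambda>s. lap_L G x0 d s > -\<eta>) at_top"
      using L[of x0] x0 px by auto
    define g where "g t = G (x0 - t)" for t
    define K where "K t = (k' - (-\<epsilon>) * t) - g t" for t
    have Gsub: "G integrable_on {x0-t..x0}" if "0 \<le> t" "t \<le> d" for t
      using integrable_subinterval_real[OF GI, of "x0-t" x0] that x0 d by auto
    have gi: "g integrable_on {0..t}" "integral {0..t} g = integral {x0-t..x0} G" if "0 \<le> t" "t \<le> d" for t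
      using refl_int[OF Gsub[OF that]] unfolding g_def by auto
    have Ki: "K integrable_on {0..t}" if "0 \<le> t" "t \<le> d" for t
    proof -
      have "(\<lambda>u. k' - (-\<epsilon>)*u) integrable_on {0..t}" using poly_int[of t k' "-\<epsilon>"] that by (auto intro: has_integral_integrable)
      then show ?thesis unfolding K_def by (rule integrable_diff[OF _ gi(1)[OF that]])
    qed
    have KE: "integral {0..t} K \<le> 0" if "0 \<le> t" "t \<le> d" for t
    proof -
      have "\<Psi> (x0 - t) \<le> \<Psi> x0" using mx[of "x0-t"] x0 d that by auto
      moreover have "\<Phi> x0 = \<Phi> (x0 - t) + integral {x0-t..x0} G" using Phi_comb[of "x0-t" x0] x0 d that by auto
      moreover have "\<epsilon>*(x0-t)\<^sup>2/2 = \<epsilon>*x0\<^sup>2/2 - \<epsilon>*x0*t + \<epsilon>*t\<^sup>2/2" "k*(x0-t) = k*x0 - k*t"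
          "(k - \<epsilon>*x0)*t = k*t - \<epsilon>*x0*t"
        by (simp_all add: power2_eq_square field_simps)
      ultimately have "integral {x0-t..x0} G \<ge> k'*t + \<epsilon>*t\<^sup>2/2"
        unfolding \<Psi>_def k'_def by linarith
      moreover have "integral {0..t} K = (k'*t - (-\<epsilon>)*t\<^sup>2/2) - integral {0..t} g"
        unfolding K_def using gi(1)[OF that] poly_int[of t k' "-\<epsilon>"] that
        by (subst integral_diff) (auto simp: integral_unique)
      ultimately show ?thesis using gi(2)[OF that] by simp
    qed
    have evb: "eventually (\<lambda>s. lap_L G x0 d s \<le> - \<epsilon> * (1 - exp (- s * d) * (1 + s * d))) at_top"
      using eventually_gt_at_top[of 0]
    proof eventually_elim
      case (elim s)
      have c1: "(\<lambda>t. exp (- s * t) * K t) integrable_on {0..d}"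
           "integral {0..d} (\<lambda>t. exp (- s * t) * K t) \<le> 0"
        using cmp_lemma[OF Ki[of d] _ KE, of "\<lambda>t. exp (- s * t)"] d elim by (auto simp: mult_left_mono)
      have "((\<lambda>t. exp (- s * t) * (G (x0 - t) - G x0)) has_integral
          - integral {0..d} (\<lambda>t. exp (- s * t) * K t) + ((k' - G x0)/s - (-\<epsilon>)/s\<^sup>2 - (k' - G x0)*exp(-s*d)/s + (-\<epsilon>)*exp(-s*d)*(1+s*d)/s\<^sup>2)) {0..d}"
      proof (rule has_integral_eq[OF _ has_integral_add[OF has_integral_neg[OF integrable_integral[OF c1(1)]] exp_int[OF elim, of d "k' - G x0" "-\<epsilon>"]]])
        show "- (exp (- s * t) * K t) + exp (- s * t) * (k' - G x0 - (-\<epsilon>) * t) = exp (- s * t) * (G (x0 - t) - G x0)" for t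
          by (simp add: K_def g_def algebra_simps)
      qed (use d in auto)
      then have "lap_L G x0 d s = s\<^sup>2 * integral {0..d} (\<lambda>t. exp (- s * t) * K t)
          - (((k' - G x0) * s) * (1 - exp (- s * d)) + \<epsilon> * (1 - exp (- s * d) * (1 + s * d)))"
        unfolding lap_L_def using elim by (simp add: integral_unique field_simps power2_eq_square)
      moreover have "s\<^sup>2 * integral {0..d} (\<lambda>t. exp (- s * t) * K t) \<le> 0"
        using c1(2) by (simp add: mult_nonneg_nonpos)
      moreover have "((k' - G x0) * s) * (1 - exp (- s * d)) \<ge> 0"
        using Age elim d by (intro mult_nonneg_nonneg) auto
      ultimately show ?case by linarith
    qed
    obtain N where N: "\<forall>s\<ge>N. lap_L G x0 d s \<le> - \<epsilon> * (1 - exp (- s * d) * (1 + s * d)) \<and>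
        exp (- s * d) * (1 + s * d) < 1/2 \<and> -(\<epsilon>/2) < lap_L G x0 d s"
      using eventually_conj[OF evb eventually_conj[OF evh[OF d(1)] ev[rule_format, OF half_gt_zero[OF epos]]]]
      unfolding eventually_at_top_linorder by blast
    then have h: "lap_L G x0 d N \<le> - \<epsilon> * (1 - exp (- N * d) * (1 + N * d))"
        "exp (- N * d) * (1 + N * d) < 1/2" "-(\<epsilon>/2) < lap_L G x0 d N" by auto
    have "\<epsilon>*(1/2) < \<epsilon>*(1 - exp (- N * d) * (1 + N * d))"
      using h(2) epos by (intro mult_strict_left_mono) auto
    then show False using h(1,3) by linarith
  qed
  show False
  proof (cases "x0 = p")
    case True
    then show False using A pq by (simp add: k'_def k_def)
  next
    case False
    show False
    proof (cases "x0 = q")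
      case True
      then show False using B pq kq by (simp add: k'_def)
    next
      case False
      then show False using A B x0 \<open>x0 \<noteq> p\<close> by force
    qed
  qed
qed



lemma lower_LD1_eq:
  "lower_LD1 a b U y d = inf (if y < b then Liminf at_top (\<lambda>s. ereal (lap_R U y d s)) else top)
                            (if a < y then Liminf at_top (\<lambda>s. ereal (lap_L U y d s)) else top)"
  unfolding lower_LD1_def by (cases "y < b"; cases "a < y") (auto simp: min.commute)

lemma upper_LD1_eq:
  "upper_LD1 a b U y d = sup (if y < b then Limsup at_top (\<lambda>s. ereal (lap_R U y d s)) else bot)
                            (if a < y then Limsup at_top (\<lambda>s. ereal (lap_L U y d s)) else bot)"
  unfolding upper_LD1_def by (cases "y < b"; cases "a < y") (auto simp: max.commute)

lemma lap_R_neg: "lap_R (\<lambda>z. - V z) y d s = - lap_R V y d s"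
proof -
  have "(\<lambda>t. exp (- s * t) * (- V (y + t) - - V y)) = (\<lambda>t. - (exp (- s * t) * (V (y + t) - V y)))"
    by (auto simp: algebra_simps)
  then show ?thesis unfolding lap_R_def by simp
qed

lemma lap_L_neg: "lap_L (\<lambda>z. - V z) y d s = - lap_L V y d s"
proof -
  have "(\<lambda>t. exp (- s * t) * (- V (y - t) - - V y)) = (\<lambda>t. - (exp (- s * t) * (V (y - t) - V y)))"
    by (auto simp: algebra_simps)
  then show ?thesis unfolding lap_L_def by simp
qed

lemma upper_neg: "upper_LD1 a b V y d = - lower_LD1 a b (\<lambda>z. - V z) y d"
proof -
  have r: "Liminf at_top (\<lambda>s. ereal (lap_R (\<lambda>z. - V z) y d s)) = - Limsup at_top (\<lambda>s. ereal (lap_R V y d s))"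
    using ereal_Liminf_uminus[of at_top "\<lambda>s. ereal (lap_R V y d s)"] by (simp add: lap_R_neg)
  have l: "Liminf at_top (\<lambda>s. ereal (lap_L (\<lambda>z. - V z) y d s)) = - Limsup at_top (\<lambda>s. ereal (lap_L V y d s))"
    using ereal_Liminf_uminus[of at_top "\<lambda>s. ereal (lap_L V y d s)"] by (simp add: lap_L_neg)
  have m: "- inf (- A) (- B) = sup A B" for A B :: ereal
    by (cases "A \<le> B") (auto simp: inf_ereal_def sup_ereal_def min_def max_def)
  show ?thesis unfolding upper_LD1_eq lower_LD1_eq r l
    using m by (cases "y < b"; cases "a < y") (auto simp: top_ereal_def bot_ereal_def)
qed

lemma adm_neg: "lap_adm a b (\<lambda>z. - V z) y d \<longleftrightarrow> lap_adm a b V y d"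
  unfolding lap_adm_def by (simp add: integrable_neg_iff)

lemma minor_neg: "lap_minor a b f V \<longleftrightarrow> lap_major a b (\<lambda>z. - f z) (\<lambda>z. - V z)"
proof -
  have c: "continuous_on {a..b} V \<longleftrightarrow> continuous_on {a..b} (\<lambda>z. - V z)"
    using continuous_on_minus[of "{a..b}" V] continuous_on_minus[of "{a..b}" "\<lambda>z. - V z"] by auto
  show ?thesis unfolding lap_minor_def lap_major_def c adm_neg upper_neg
    by (simp add: ereal_uminus_le_reorder ereal_uminus_less_reorder ereal_uminus_eq_reorder)
qed

lemma has_LD1_neg: "has_LD1 a b F y D \<Longrightarrow> has_LD1 a b (\<lambda>z. - F z) y (- D)"
  unfolding has_LD1_def adm_neg lap_R_neg lap_L_neg by (auto intro: tendsto_minus)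

lemma liminf_shift_le:
  assumes "((\<lambda>s. \<phi> s - \<psi> s) \<longlongrightarrow> 0) at_top"
  shows "Liminf at_top (\<lambda>s. ereal (\<phi> s)) \<le> Liminf at_top (\<lambda>s. ereal (\<psi> s :: real))"
proof (subst le_Liminf_iff, intro allI impI)
  fix y assume y: "y < Liminf at_top (\<lambda>s. ereal (\<phi> s))"
  obtain z1 where z1: "y < ereal z1" "ereal z1 < Liminf at_top (\<lambda>s. ereal (\<phi> s))"
    using ereal_dense2[OF y] by auto
  obtain z2 where z2: "ereal z1 < ereal z2" "ereal z2 < Liminf at_top (\<lambda>s. ereal (\<phi> s))"
    using ereal_dense2[OF z1(2)] by auto
  have e1: "eventually (\<lambda>s. ereal z2 < ereal (\<phi> s)) at_top"
    using z2(2) le_Liminf_iff[of "Liminf at_top (\<lambda>s. ereal (\<phi> s))" at_top "\<lambda>s. ereal (\<phi> s)"] by auto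
  have e2: "eventually (\<lambda>s. \<phi> s - \<psi> s < z2 - z1) at_top"
    using order_tendstoD(2)[OF assms, of "z2 - z1"] z2(1) by auto
  show "eventually (\<lambda>s. y < ereal (\<psi> s)) at_top"
    using e1 e2
  proof eventually_elim
    case (elim s)
    then have "z1 < \<psi> s" by simp
    then show ?case using z1(1) by (meson ereal_less_eq(3) less_le_trans order_less_imp_le)
  qed
qed

lemma liminf_shift_eq:
  assumes "((\<lambda>s. \<phi> s - \<psi> s) \<longlongrightarrow> 0) at_top"
  shows "Liminf at_top (\<lambda>s. ereal (\<phi> s)) = Liminf at_top (\<lambda>s. ereal (\<psi> s :: real))"
proof (rule antisym)
  show "Liminf at_top (\<lambda>s. ereal (\<phi> s)) \<le> Liminf at_top (\<lambda>s. ereal (\<psi> s))"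
    by (rule liminf_shift_le[OF assms])
  have "((\<lambda>s. \<psi> s - \<phi> s) \<longlongrightarrow> 0) at_top"
    using tendsto_minus[OF assms] by simp
  then show "Liminf at_top (\<lambda>s. ereal (\<psi> s)) \<le> Liminf at_top (\<lambda>s. ereal (\<phi> s))"
    by (rule liminf_shift_le)
qed

lemma F_int:
  fixes F f :: "real \<Rightarrow> real"
  assumes F: "\<forall>x\<in>{a..b}. has_LD1 a b F x (f x)"
  shows "F integrable_on {a..b}"
proof -
  have "\<forall>x\<in>cbox a b. \<exists>d>0. \<forall>u v. x \<in> cbox u v \<and> cbox u v \<subseteq> ball x d \<and> cbox u v \<subseteq> cbox a b \<longrightarrow>
    F integrable_on cbox u v"
  proof
    fix x assume x: "x \<in> cbox a b"
    from F x have "has_LD1 a b F x (f x)" by simp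
    then obtain d where d: "lap_adm a b F x d" unfolding has_LD1_def by blast
    show "\<exists>d>0. \<forall>u v. x \<in> cbox u v \<and> cbox u v \<subseteq> ball x d \<and> cbox u v \<subseteq> cbox a b \<longrightarrow> F integrable_on cbox u v"
    proof (intro exI[of _ d] conjI allI impI)
      show "d > 0" using d by (simp add: lap_adm_def)
      fix u v assume uv: "x \<in> cbox u v \<and> cbox u v \<subseteq> ball x d \<and> cbox u v \<subseteq> cbox a b"
      then have ux: "u \<le> x" "x \<le> v" by auto
      have "u \<in> cbox u v" "v \<in> cbox u v" using ux by auto
      then have "u \<in> ball x d" "v \<in> ball x d" "u \<in> cbox a b" "v \<in> cbox a b" using uv by blast+
      then have ud: "x - d < u" "v < x + d" "a \<le> u" "v \<le> b" by (auto simp: dist_real_def)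
      have left: "F integrable_on {u..x}"
      proof (cases "u < x")
        case True
        then have "a < x" using ud by auto
        then have "F integrable_on {x-d..x}" using d by (simp add: lap_adm_def)
        then show ?thesis using integrable_subinterval_real[of F "x-d" x u x] ud ux by auto
      next
        case False
        then show ?thesis using ux integrable_on_refl[of F x] by auto
      qed
      have right: "F integrable_on {x..v}"
      proof (cases "x < v")
        case True
        then have "x < b" using ud by auto
        then have "F integrable_on {x..x+d}" using d by (simp add: lap_adm_def)
        then show ?thesis using integrable_subinterval_real[of F x "x+d" x v] ud ux by auto
      next
        case False
        then show ?thesis using ux integrable_on_refl[of F x] by auto
      qed
      show "F integrable_on cbox u v"
        using Henstock_Kurzweil_Integration.integrable_combine[OF ux left right] by simp
    qed
  qed
  from integrable_on_little_subintervals[OF this] show ?thesis by simp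
qed

lemma lap_R_diff:
  fixes U F :: "real \<Rightarrow> real"
  assumes "U integrable_on {y..y+d}" "F integrable_on {y..y+d}" "0 \<le> s" "0 \<le> d"
  shows "lap_R (\<lambda>z. U z - F z) y d s = lap_R U y d s - lap_R F y d s"
proof -
  have iU: "(\<lambda>t. exp (- s * t) * (U (y+t) - U y)) integrable_on {0..d}"
    using shift_int(1)[OF assms(1)] assms by (intro exp_weight_integrable integrable_diff) auto
  have iF: "(\<lambda>t. exp (- s * t) * (F (y+t) - F y)) integrable_on {0..d}"
    using shift_int(1)[OF assms(2)] assms by (intro exp_weight_integrable integrable_diff) auto
  have "(\<lambda>t. exp (- s * t) * (U (y + t) - F (y + t) - (U y - F y))) =
     (\<lambda>t. exp (- s * t) * (U (y+t) - U y) - exp (- s * t) * (F (y+t) - F y))"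
    by (auto simp: algebra_simps)
  then have "integral {0..d} (\<lambda>t. exp (- s * t) * (U (y + t) - F (y + t) - (U y - F y))) =
     integral {0..d} (\<lambda>t. exp (- s * t) * (U (y+t) - U y)) - integral {0..d} (\<lambda>t. exp (- s * t) * (F (y+t) - F y))"
    using integral_diff[OF iU iF] by simp
  then show ?thesis unfolding lap_R_def by (simp add: right_diff_distrib)
qed

lemma lap_L_diff:
  fixes U F :: "real \<Rightarrow> real"
  assumes "U integrable_on {y-d..y}" "F integrable_on {y-d..y}" "0 \<le> s" "0 \<le> d"
  shows "lap_L (\<lambda>z. U z - F z) y d s = lap_L U y d s - lap_L F y d s"
proof -
  have iU: "(\<lambda>t. exp (- s * t) * (U (y-t) - U y)) integrable_on {0..d}"
    using refl_int(1)[OF assms(1)] assms by (intro exp_weight_integrable integrable_diff) auto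
  have iF: "(\<lambda>t. exp (- s * t) * (F (y-t) - F y)) integrable_on {0..d}"
    using refl_int(1)[OF assms(2)] assms by (intro exp_weight_integrable integrable_diff) auto
  have "(\<lambda>t. exp (- s * t) * (U (y - t) - F (y - t) - (U y - F y))) =
     (\<lambda>t. exp (- s * t) * (U (y-t) - U y) - exp (- s * t) * (F (y-t) - F y))"
    by (auto simp: algebra_simps)
  then have "integral {0..d} (\<lambda>t. exp (- s * t) * (U (y - t) - F (y - t) - (U y - F y))) =
     integral {0..d} (\<lambda>t. exp (- s * t) * (U (y-t) - U y)) - integral {0..d} (\<lambda>t. exp (- s * t) * (F (y-t) - F y))"
    using integral_diff[OF iU iF] by simp
  then show ?thesis unfolding lap_L_def by (simp add: right_diff_distrib)
qed

lemma ev_combine: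
  fixes u1 u2 v1 v2 :: "real \<Rightarrow> real"
  assumes "ereal c \<le> Liminf at_top (\<lambda>s. ereal (u1 s))" "((\<lambda>s. u1 s - u2 s) \<longlongrightarrow> 0) at_top"
    "(v1 \<longlongrightarrow> c) at_top" "((\<lambda>s. v1 s - v2 s) \<longlongrightarrow> 0) at_top" "\<eta> > 0"
  shows "eventually (\<lambda>s. u2 s - v2 s > -\<eta>) at_top"
proof -
  have e1: "eventually (\<lambda>s. ereal (c - \<eta>/4) < ereal (u1 s)) at_top"
  proof -
    have "\<forall>y<ereal c. eventually (\<lambda>s. y < ereal (u1 s)) at_top"
      using le_Liminf_iff[of "ereal c" at_top "\<lambda>s. ereal (u1 s)"] assms(1) by blast
    moreover have "ereal (c - \<eta>/4) < ereal c" using assms(5) by simp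
    ultimately show ?thesis by blast
  qed
  have e2: "eventually (\<lambda>s. u1 s - u2 s < \<eta>/4) at_top"
    using order_tendstoD(2)[OF assms(2), of "\<eta>/4"] assms(5) by auto
  have e3: "eventually (\<lambda>s. v1 s < c + \<eta>/4) at_top"
    using order_tendstoD(2)[OF assms(3), of "c + \<eta>/4"] assms(5) by auto
  have e4: "eventually (\<lambda>s. v1 s - v2 s > - \<eta>/4) at_top"
    using order_tendstoD(1)[OF assms(4), of "-\<eta>/4"] assms(5) by auto
  show ?thesis using e1 e2 e3 e4 by eventually_elim auto
qed



lemma L1:
  fixes F f U :: "real \<Rightarrow> real"
  assumes F: "\<forall>x\<in>{a..b}. has_LD1 a b F x (f x)" and U: "lap_major a c f U"
    and ap: "a \<le> p" and pq0: "p \<le> q" and qc: "q \<le> c" and cb: "c \<le> b"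
  shows "F q - F p \<le> U q - U p"
proof (cases "p = q")
  case True then show ?thesis by simp
next
  case False
  then have pq: "p < q" using pq0 by simp
  define G where "G = (\<lambda>z. U z - F z)"
  have Uc: "continuous_on {a..c} U" using U by (simp add: lap_major_def)
  have UI: "U integrable_on {p..q}"
    by (intro integrable_continuous_real continuous_on_subset[OF Uc]) (use ap qc in auto)
  have FI: "F integrable_on {p..q}"
    using integrable_subinterval_real[OF F_int[OF F], of p q] ap qc cb by auto
  have GI: "G integrable_on {p..q}" unfolding G_def by (rule integrable_diff[OF UI FI])
  have "G p \<le> G q"
  proof (rule MT[OF pq GI])
    fix y assume y: "p \<le> y" "y < q"
    then have yac: "y \<in> {a..c}" and yab: "y \<in> {a..b}" and yc: "y < c" and yb: "y < b"
      using ap qc cb by auto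
    obtain dU where dU: "lap_adm a c U y dU" "ereal (f y) \<le> lower_LD1 a c U y dU"
      using U yac unfolding lap_major_def by blast
    have LU: "ereal (f y) \<le> Liminf at_top (\<lambda>s. ereal (lap_R U y dU s))"
      using dU(2) yc unfolding lower_LD1_eq by (simp add: le_inf_iff)
    have dUp: "dU > 0" "U integrable_on {y..y+dU}"
      using dU(1) yc unfolding lap_adm_def by auto
    obtain dF where dF: "lap_adm a b F y dF" "(lap_R F y dF \<longlongrightarrow> f y) at_top"
      using F yab yb unfolding has_LD1_def by blast
    have dFp: "dF > 0" "F integrable_on {y..y+dF}"
      using dF(1) yb unfolding lap_adm_def by auto
    define d where "d = min (min dU dF) (q - y)"
    have d: "d > 0" "d \<le> dU" "d \<le> dF" "y + d \<le> q" using dUp dFp y by (auto simp: d_def)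
    have Ud: "U integrable_on {y..y+d}" using integrable_subinterval_real[OF dUp(2), of y "y+d"] d by auto
    have Fd: "F integrable_on {y..y+d}" using integrable_subinterval_real[OF dFp(2), of y "y+d"] d by auto
    show "\<exists>d>0. y + d \<le> q \<and> (\<forall>\<eta>>0. eventually (\<lambda>s. lap_R G y d s > -\<eta>) at_top)"
    proof (intro exI[of _ d] conjI allI impI)
      fix \<eta> :: real assume eta: "\<eta> > 0"
      have "eventually (\<lambda>s. lap_R U y d s - lap_R F y d s > -\<eta>) at_top"
        by (rule ev_combine[OF LU shrink_R[OF dUp(2) d(1,2)] dF(2) shrink_R[OF dFp(2) d(1,3)] eta])
      then show "eventually (\<lambda>s. lap_R G y d s > -\<eta>) at_top"
        using eventually_ge_at_top[of 0]
        by eventually_elim (use lap_R_diff[OF Ud Fd] d in \<open>auto simp: G_def\<close>)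
    qed (use d in auto)
  next
    fix y assume y: "p < y" "y \<le> q"
    then have yac: "y \<in> {a..c}" and yab: "y \<in> {a..b}" and ay: "a < y"
      using ap qc cb by auto
    obtain dU where dU: "lap_adm a c U y dU" "ereal (f y) \<le> lower_LD1 a c U y dU"
      using U yac unfolding lap_major_def by blast
    have LU: "ereal (f y) \<le> Liminf at_top (\<lambda>s. ereal (lap_L U y dU s))"
      using dU(2) ay unfolding lower_LD1_eq by (simp add: le_inf_iff)
    have dUp: "dU > 0" "U integrable_on {y-dU..y}"
      using dU(1) ay unfolding lap_adm_def by auto
    obtain dF where dF: "lap_adm a b F y dF" "(lap_L F y dF \<longlongrightarrow> f y) at_top"
      using F yab ay unfolding has_LD1_def by blast
    have dFp: "dF > 0" "F integrable_on {y-dF..y}"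
      using dF(1) ay unfolding lap_adm_def by auto
    define d where "d = min (min dU dF) (y - p)"
    have d: "d > 0" "d \<le> dU" "d \<le> dF" "p \<le> y - d" using dUp dFp y by (auto simp: d_def)
    have Ud: "U integrable_on {y-d..y}" using integrable_subinterval_real[OF dUp(2), of "y-d" y] d by auto
    have Fd: "F integrable_on {y-d..y}" using integrable_subinterval_real[OF dFp(2), of "y-d" y] d by auto
    show "\<exists>d>0. p \<le> y - d \<and> (\<forall>\<eta>>0. eventually (\<lambda>s. lap_L G y d s > -\<eta>) at_top)"
    proof (intro exI[of _ d] conjI allI impI)
      fix \<eta> :: real assume eta: "\<eta> > 0"
      have "eventually (\<lambda>s. lap_L U y d s - lap_L F y d s > -\<eta>) at_top"
        by (rule ev_combine[OF LU shrink_L[OF dUp(2) d(1,2)] dF(2) shrink_L[OF dFp(2) d(1,3)] eta])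
      then show "eventually (\<lambda>s. lap_L G y d s > -\<eta>) at_top"
        using eventually_ge_at_top[of 0]
        by eventually_elim (use lap_L_diff[OF Ud Fd] d in \<open>auto simp: G_def\<close>)
    qed (use d in auto)
  qed
  then show ?thesis by (simp add: G_def)
qed

lemma L2:
  fixes f U :: "real \<Rightarrow> real"
  assumes U: "lap_major a b f U" and ax: "a \<le> x" and xb: "x \<le> b"
  shows "lap_major a x f U"
  unfolding lap_major_def
proof (intro conjI ballI)
  show "continuous_on {a..x} U"
    using U continuous_on_subset[of "{a..b}" U "{a..x}"] xb by (auto simp: lap_major_def)
  fix y assume y: "y \<in> {a..x}"
  then have yab: "y \<in> {a..b}" using xb by auto
  obtain dl where dl: "lap_adm a b U y dl" "ereal (f y) \<le> lower_LD1 a b U y dl" "lower_LD1 a b U y dl > - \<infinity>"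
    using U yab unfolding lap_major_def by blast
  define d where "d = (if y < x then min dl (x - y) else dl)"
  have d: "0 < d" "d \<le> dl" using dl(1) by (auto simp: d_def lap_adm_def)
  have adm: "lap_adm a x U y d"
    unfolding lap_adm_def
  proof (intro conjI impI)
    show "0 < d" by (rule d(1))
  next
    assume yx: "y < x"
    then have "y < b" using xb by auto
    then have I: "U integrable_on {y..y+dl}" using dl(1) by (auto simp: lap_adm_def)
    show "y + d \<le> x" using yx by (auto simp: d_def)
    show "U integrable_on {y..y+d}" using integrable_subinterval_real[OF I, of y "y+d"] d by auto
  next
    assume ay: "a < y"
    then have I: "U integrable_on {y-dl..y}" "a \<le> y - dl" using dl(1) by (auto simp: lap_adm_def)
    show "a \<le> y - d" using I d by auto
    show "U integrable_on {y-d..y}" using integrable_subinterval_real[OF I(1), of "y-d" y] d by auto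
  qed
  have le: "lower_LD1 a b U y dl \<le> lower_LD1 a x U y d"
    unfolding lower_LD1_eq
  proof (rule inf_mono)
    show "(if y < b then Liminf at_top (\<lambda>s. ereal (lap_R U y dl s)) else top)
        \<le> (if y < x then Liminf at_top (\<lambda>s. ereal (lap_R U y d s)) else top)"
    proof (cases "y < x")
      case True
      then have "y < b" using xb by auto
      then have I: "U integrable_on {y..y+dl}" using dl(1) by (auto simp: lap_adm_def)
      have "Liminf at_top (\<lambda>s. ereal (lap_R U y dl s)) = Liminf at_top (\<lambda>s. ereal (lap_R U y d s))"
        by (rule liminf_shift_eq[OF shrink_R[OF I d]])
      then show ?thesis using True \<open>y < b\<close> by simp
    qed simp
    show "(if a < y then Liminf at_top (\<lambda>s. ereal (lap_L U y dl s)) else top)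
        \<le> (if a < y then Liminf at_top (\<lambda>s. ereal (lap_L U y d s)) else top)"
    proof (cases "a < y")
      case True
      then have I: "U integrable_on {y-dl..y}" using dl(1) by (auto simp: lap_adm_def)
      have "Liminf at_top (\<lambda>s. ereal (lap_L U y dl s)) = Liminf at_top (\<lambda>s. ereal (lap_L U y d s))"
        by (rule liminf_shift_eq[OF shrink_L[OF I d]])
      then show ?thesis using True by simp
    qed simp
  qed
  show "\<exists>\<delta>. lap_adm a x U y \<delta> \<and> ereal (f y) \<le> lower_LD1 a x U y \<delta> \<and> - \<infinity> < lower_LD1 a x U y \<delta>"
    using adm le dl(2,3) by (intro exI[of _ d]) auto
qed

theorem theorem5p4:
  fixes F f :: "real \<Rightarrow> real" and a b :: real
  assumes "\<forall>x\<in>{a..b}. has_LD1 a b F x (f x)"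
    and "lap_integrable a b f"
  shows "\<forall>x\<in>{a..b}. lap_integrable a x f \<and> lap_integral a x f = F x - F a"
proof
  fix x assume x: "x \<in> {a..b}"
  then have ax: "a \<le> x" and xb: "x \<le> b" by auto
  have Fn: "\<forall>x\<in>{a..b}. has_LD1 a b (\<lambda>z. - F z) x ((\<lambda>z. - f z) x)"
    using assms(1) has_LD1_neg by auto
  define Mj where "Mj c = {U c - U a | U. lap_major a c f U}" for c
  define Mn where "Mn c = {V c - V a | V. lap_minor a c f V}" for c
  have lowMj: "F c - F a \<le> m" if mm: "m \<in> Mj c" and ac: "a \<le> c" and cb: "c \<le> b" for m c
  proof -
    obtain U where U: "m = U c - U a" "lap_major a c f U" using mm unfolding Mj_def by auto
    show ?thesis using L1[OF assms(1) U(2) order_refl ac order_refl cb] U(1) by simp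
  qed
  have upMn: "m \<le> F c - F a" if mm: "m \<in> Mn c" and ac: "a \<le> c" and cb: "c \<le> b" for m c
  proof -
    obtain V where V: "m = V c - V a" "lap_minor a c f V" using mm unfolding Mn_def by auto
    have "lap_major a c (\<lambda>z. - f z) (\<lambda>z. - V z)" using V(2) minor_neg by auto
    from L1[OF Fn this order_refl ac order_refl cb] V(1) show ?thesis by simp
  qed
  have int: "Sup (ereal ` Mn b) = Inf (ereal ` Mj b)"
    using assms(2) unfolding lap_integrable_def Let_def Mj_def Mn_def by auto
  have ab: "a \<le> b" using ax xb by simp
  have I1: "ereal (F b - F a) \<le> Inf (ereal ` Mj b)"
    by (rule Inf_greatest) (use lowMj[OF _ ab order_refl] in auto)
  have I2: "Sup (ereal ` Mn b) \<le> ereal (F b - F a)"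
    by (rule Sup_least) (use upMn[OF _ ab order_refl] in auto)
  have Ieq: "Inf (ereal ` Mj b) = ereal (F b - F a)" using I1 I2 int by simp
  have Seq: "Sup (ereal ` Mn b) = ereal (F b - F a)" using I1 I2 int by simp
  have apU: "\<exists>m\<in>Mj x. m < F x - F a + e" if e: "e > 0" for e
  proof -
    have "Inf (ereal ` Mj b) < ereal (F b - F a + e)" using Ieq e by simp
    then obtain m where m: "m \<in> Mj b" "m < F b - F a + e" by (auto simp: Inf_less_iff)
    then obtain U where U: "m = U b - U a" "lap_major a b f U" unfolding Mj_def by auto
    have Ux: "lap_major a x f U" by (rule L2[OF U(2) ax xb])
    have "F b - F x \<le> U b - U x" by (rule L1[OF assms(1) U(2) ax xb order_refl order_refl])
    moreover have "U x - U a \<in> Mj x" using Ux unfolding Mj_def by auto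
    ultimately show ?thesis using m U(1) by (intro bexI[of _ "U x - U a"]) auto
  qed
  have apV: "\<exists>m\<in>Mn x. F x - F a - e < m" if e: "e > 0" for e
  proof -
    have "ereal (F b - F a - e) < Sup (ereal ` Mn b)" using Seq e by simp
    then obtain m where m: "m \<in> Mn b" "F b - F a - e < m" by (auto simp: less_Sup_iff)
    then obtain V where V: "m = V b - V a" "lap_minor a b f V" unfolding Mn_def by auto
    have Vn: "lap_major a b (\<lambda>z. - f z) (\<lambda>z. - V z)" using V(2) minor_neg by auto
    have "lap_major a x (\<lambda>z. - f z) (\<lambda>z. - V z)" by (rule L2[OF Vn ax xb])
    then have Vx: "lap_minor a x f V" using minor_neg by auto
    have "- F b - - F x \<le> - V b - - V x" using L1[OF Fn Vn ax xb order_refl order_refl] by simp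
    moreover have "V x - V a \<in> Mn x" using Vx unfolding Mn_def by auto
    ultimately show ?thesis using m V(1) by (intro bexI[of _ "V x - V a"]) auto
  qed
  have J: "Inf (ereal ` Mj x) = ereal (F x - F a)"
  proof (rule antisym)
    show "Inf (ereal ` Mj x) \<le> ereal (F x - F a)"
    proof (rule ereal_le_epsilon2)
      fix e :: real assume e: "0 < e"
      obtain m where m: "m \<in> Mj x" "m < F x - F a + e" using apU[OF e] by auto
      have "Inf (ereal ` Mj x) \<le> ereal m" using m(1) by (auto intro: Inf_lower)
      also have "\<dots> \<le> ereal (F x - F a) + ereal e" using m(2) by simp
      finally show "Inf (ereal ` Mj x) \<le> ereal (F x - F a) + ereal e" .
    qed
    show "ereal (F x - F a) \<le> Inf (ereal ` Mj x)"
      by (rule Inf_greatest) (use lowMj[OF _ ax xb] in auto)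
  qed
  have K: "Sup (ereal ` Mn x) = ereal (F x - F a)"
  proof (rule antisym)
    show "ereal (F x - F a) \<le> Sup (ereal ` Mn x)"
    proof (rule ereal_le_epsilon2)
      fix e :: real assume e: "0 < e"
      obtain m where m: "m \<in> Mn x" "F x - F a - e < m" using apV[OF e] by auto
      have "ereal (F x - F a) \<le> ereal m + ereal e" using m(2) by simp
      also have "\<dots> \<le> Sup (ereal ` Mn x) + ereal e"
      proof -
        have "ereal m \<le> Sup (ereal ` Mn x)" by (rule Sup_upper) (use m(1) in auto)
        then show ?thesis by (rule add_right_mono)
      qed
      finally show "ereal (F x - F a) \<le> Sup (ereal ` Mn x) + ereal e" .
    qed
    show "Sup (ereal ` Mn x) \<le> ereal (F x - F a)"
      by (rule Sup_least) (use upMn[OF _ ax xb] in auto)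
  qed
  show "lap_integrable a x f \<and> lap_integral a x f = F x - F a"
    using J K unfolding lap_integrable_def lap_integral_def Let_def Mj_def Mn_def by simp
qed


end
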